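(* Let $\lambda>0$ and let $H_3=\mathbb{R}^3$ with coordinates $(x,y,z)$ carry the Lorentzian metric $g_2=\frac{1}{\lambda^2}dx^2+dy^2-(x\,dy+dz)^2$, with Levi-Civita connection $\nabla$. Let $e_1=\partial_y-x\partial_z$, $e_2=\lambda\partial_x$, $e_3=\partial_z$, and let $V_2=\partial_y\,(=e_1+xe_3)$. Then every $V_2$-magnetic curve $\gamma(t)=(x(t),y(t),z(t))$, i.e. every smooth curve with $\nabla_{\gamma'}\gamma'=V_2\wedge\gamma'$, satisfies the system $y''-x'(z'+xy')=-\frac{xx'}{\lambda}$, $(\lambda y'+1)(z'+xy')=xy'-\frac{x''}{\lambda}$, $(z'+xy')'=-\frac{x'}{\lambda}$.
   Context: $(e_1,e_2,e_3)$ is a $g_2$-orthonormal frame with $e_3$ timelike. For $X=\sum X^ie_i$, $Y=\sum Y^ie_i$ the vector product is defined in this frame by $X\wedge Y=(X^2Y^3-X^3Y^2)e_1+(X^3Y^1-X^1Y^3)e_2+(X^2Y^1-X^1Y^2)e_3$. Primes denote derivatives in $t$. *)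

theory Defs
  imports "HOL-Analysis.Analysis"
begin

text \<open>Points of R^3 are vectors in real^3; coordinates x = p$1, y = p$2, z = p$3.
  The coordinate fields d/dx, d/dy, d/dz are axis 1 1, axis 2 1, axis 3 1.\<close>

definition coord3 :: "real \<Rightarrow> real \<Rightarrow> real \<Rightarrow> real^3" where
  "coord3 a b c = vector [a, b, c]"

definition g2 :: "real \<Rightarrow> real^3 \<Rightarrow> real^3 \<Rightarrow> real^3 \<Rightarrow> real" where
  "g2 lam p u v = (u$1) * (v$1) / lam^2 + (u$2) * (v$2)
     - (p$1 * u$2 + u$3) * (p$1 * v$2 + v$3)"

definition metric_matrix :: "(real^3 \<Rightarrow> real^3 \<Rightarrow> real^3 \<Rightarrow> real) \<Rightarrow> real^3 \<Rightarrow> real^3^3" where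
  "metric_matrix G p = (\<chi> i j. G p (axis i 1) (axis j 1))"

definition pdiff :: "(real^3 \<Rightarrow> real) \<Rightarrow> 3 \<Rightarrow> real^3 \<Rightarrow> real" where
  "pdiff f i p = deriv (\<lambda>t. f (p + t *\<^sub>R axis i 1)) 0"

definition christoffel :: "(real^3 \<Rightarrow> real^3 \<Rightarrow> real^3 \<Rightarrow> real) \<Rightarrow> 3 \<Rightarrow> 3 \<Rightarrow> 3 \<Rightarrow> real^3 \<Rightarrow> real" where
  "christoffel G k i j p = (1/2) * (\<Sum>l\<in>UNIV. matrix_inv (metric_matrix G p) $ k $ l *
      (pdiff (\<lambda>q. metric_matrix G q $ j $ l) i p + pdiff (\<lambda>q. metric_matrix G q $ i $ l) j p
       - pdiff (\<lambda>q. metric_matrix G q $ i $ j) l p))"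

text \<open>Covariant acceleration nabla_{c'} c' of a curve c with velocity c' and
  (ordinary) second derivative c'', in coordinates.\<close>
definition cov_acc :: "(real^3 \<Rightarrow> real^3 \<Rightarrow> real^3 \<Rightarrow> real) \<Rightarrow> (real \<Rightarrow> real^3) \<Rightarrow>
    (real \<Rightarrow> real^3) \<Rightarrow> (real \<Rightarrow> real^3) \<Rightarrow> real \<Rightarrow> real^3" where
  "cov_acc G c c' c'' t = (\<chi> k. c'' t $ k +
      (\<Sum>i\<in>UNIV. \<Sum>j\<in>UNIV. christoffel G k i j (c t) * (c' t $ i) * (c' t $ j)))"

definition frame :: "real \<Rightarrow> real^3 \<Rightarrow> 3 \<Rightarrow> real^3" where
  "frame lam p i = (if i = 1 then axis 2 1 - (p$1) *\<^sub>R axis 3 1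
                    else if i = 2 then lam *\<^sub>R axis 1 1
                    else axis 3 1)"

definition frame_comp :: "(3 \<Rightarrow> real^3) \<Rightarrow> real^3 \<Rightarrow> real^3" where
  "frame_comp E X = (THE c. X = (\<Sum>i\<in>UNIV. (c$i) *\<^sub>R E i))"

definition wedge :: "(3 \<Rightarrow> real^3) \<Rightarrow> real^3 \<Rightarrow> real^3 \<Rightarrow> real^3" where
  "wedge E X Y = (let a = frame_comp E X; b = frame_comp E Y in
      (a$2 * b$3 - a$3 * b$2) *\<^sub>R E 1 + (a$3 * b$1 - a$1 * b$3) *\<^sub>R E 2
      + (a$2 * b$1 - a$1 * b$2) *\<^sub>R E 3)"

definition V2 :: "real^3 \<Rightarrow> real^3" where
  "V2 p = axis 2 1"

end

theory Submission
  imports Defs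
begin

lemma ax: "(axis i (1::real) :: real^3) $ k = (if k = i then 1 else 0)"
  by (simp add: axis_def)

lemma neqs: "(1::3) \<noteq> 2" "(1::3) \<noteq> 3" "(2::3) \<noteq> 3" "(2::3) \<noteq> 1" "(3::3) \<noteq> 1" "(3::3) \<noteq> 2"
  by simp_all

lemma pd: "pdiff (\<lambda>q. metric_matrix (g2 lam) q $ j $ l) i p =
   - ((if i = 1 then 1 else 0) * (if j = 2 then 1 else 0) * (p$1 * (if l = 2 then 1 else 0) + (if l = 3 then 1 else 0))
     + (p$1 * (if j = 2 then 1 else 0) + (if j = 3 then 1 else 0)) * (if i = 1 then 1 else 0) * (if l = 2 then 1 else 0))"
proof -
  define e where "e = (if i = 1 then 1 else 0::real)"
  define aj where "aj = (if j = 2 then 1 else 0::real)"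
  define bj where "bj = (if j = 3 then 1 else 0::real)"
  define al where "al = (if l = 2 then 1 else 0::real)"
  define bl where "bl = (if l = 3 then 1 else 0::real)"
  define C where "C = (if j = 1 \<and> l = 1 then 1/lam^2 else 0) + (if j = 2 \<and> l = 2 then 1 else (0::real))"
  have eq: "(\<lambda>t. metric_matrix (g2 lam) (p + t *\<^sub>R axis i 1) $ j $ l) =
     (\<lambda>t. C - ((p$1 + t*e)*aj + bj) * ((p$1 + t*e)*al + bl))"
    by (auto simp: metric_matrix_def g2_def ax e_def aj_def bj_def al_def bl_def C_def fun_eq_iff)
  have "((\<lambda>t. C - ((p$1 + t*e)*aj + bj) * ((p$1 + t*e)*al + bl)) has_real_derivative
      - (e*aj*(p$1*al+bl) + (p$1*aj+bj)*e*al)) (at 0)"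
    by (auto intro!: derivative_eq_intros simp: algebra_simps)
  then show ?thesis unfolding pdiff_def eq
    by (subst DERIV_imp_deriv) (auto simp: e_def aj_def bj_def al_def bl_def)
qed

lemma minv_unique:
  fixes A B :: "real^3^3"
  assumes "A ** B = mat 1" "B ** A = mat 1"
  shows "matrix_inv A = B"
proof -
  have ex: "\<exists>A'. A ** A' = mat 1 \<and> A' ** A = mat 1" using assms by blast
  define C where "C = matrix_inv A"
  have C: "A ** C = mat 1" "C ** A = mat 1"
    using someI_ex[OF ex] unfolding C_def matrix_inv_def by auto
  have "C = C ** (A ** B)" using assms by simp
  also have "\<dots> = (C ** A) ** B" by (simp add: matrix_mul_assoc)
  also have "\<dots> = B" using C by simp
  finally show ?thesis unfolding C_def .
qed

lemma mm: "metric_matrix (g2 lam) p = vector [vector [1/lam^2, 0, 0], vector [0, 1 - (p$1)^2, - p$1], vector [0, - p$1, -1]]"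
  by (simp add: vec_eq_iff forall_3 metric_matrix_def g2_def ax power2_eq_square)

lemma minv: assumes "lam \<noteq> 0" shows "matrix_inv (metric_matrix (g2 lam) p) =
   vector [vector [lam^2, 0, 0], vector [0, 1, - p$1], vector [0, - p$1, (p$1)^2 - 1]]"
  unfolding mm using assms
  by (intro minv_unique) (auto simp: vec_eq_iff forall_3 matrix_matrix_mult_def sum_3 mat_def algebra_simps power2_eq_square)

lemma fc: assumes "lam \<noteq> 0" shows "frame_comp (frame lam p) v = vector [v$2, v$1/lam, v$3 + p$1 * v$2]"
  unfolding frame_comp_def
proof (rule the_equality)
  show "v = (\<Sum>i\<in>UNIV. (vector [v$2, v$1/lam, v$3 + p$1 * v$2] $ i) *\<^sub>R frame lam p i)"
    using assms by (simp add: vec_eq_iff forall_3 sum_3 frame_def ax)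
next
  fix c :: "real^3" assume "v = (\<Sum>i\<in>UNIV. (c$i) *\<^sub>R frame lam p i)"
  then have "v$1 = lam * c$2" "v$2 = c$1" "v$3 = c$3 - p$1 * c$1"
    by (simp_all add: sum_3 frame_def ax)
  then show "c = vector [v$2, v$1/lam, v$3 + p$1 * v$2]"
    using assms by (simp add: vec_eq_iff forall_3)
qed

theorem mainTheorem6:
  fixes lam :: real and I :: "real set"
    and x y z x' y' z' x'' y'' z'' :: "real \<Rightarrow> real"
  assumes lam: "lam > 0"
    and I: "open I"
    and dx: "\<And>t. t \<in> I \<Longrightarrow> (x has_real_derivative x' t) (at t)"
    and dy: "\<And>t. t \<in> I \<Longrightarrow> (y has_real_derivative y' t) (at t)"
    and dz: "\<And>t. t \<in> I \<Longrightarrow> (z has_real_derivative z' t) (at t)"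
    and dx': "\<And>t. t \<in> I \<Longrightarrow> (x' has_real_derivative x'' t) (at t)"
    and dy': "\<And>t. t \<in> I \<Longrightarrow> (y' has_real_derivative y'' t) (at t)"
    and dz': "\<And>t. t \<in> I \<Longrightarrow> (z' has_real_derivative z'' t) (at t)"
    and magnetic: "\<And>t. t \<in> I \<Longrightarrow>
      cov_acc (g2 lam) (\<lambda>s. coord3 (x s) (y s) (z s)) (\<lambda>s. coord3 (x' s) (y' s) (z' s))
              (\<lambda>s. coord3 (x'' s) (y'' s) (z'' s)) t
      = wedge (frame lam (coord3 (x t) (y t) (z t))) (V2 (coord3 (x t) (y t) (z t)))
              (coord3 (x' t) (y' t) (z' t))"
    and t: "t \<in> I"
  shows "y'' t - x' t * (z' t + x t * y' t) = - (x t * x' t) / lam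
    \<and> (lam * y' t + 1) * (z' t + x t * y' t) = x t * y' t - x'' t / lam
    \<and> z'' t + x' t * y' t + x t * y'' t = - x' t / lam"
proof -
  have ln: "lam \<noteq> 0" using lam by simp
  note M = magnetic[OF t]
  have e1: "x'' t + lam^2 * (x t * (y' t)^2 + y' t * z' t) = - lam * z' t"
    using arg_cong[OF M, of "\<lambda>v. v $ 1"] ln
    by (simp add: cov_acc_def christoffel_def pd minv sum_3 wedge_def fc frame_def V2_def coord3_def ax Let_def)
       (simp add: algebra_simps power2_eq_square)
  have e2: "y'' t - x t * x' t * y' t - x' t * z' t = - x t * x' t / lam"
    using arg_cong[OF M, of "\<lambda>v. v $ 2"] ln
    by (simp add: cov_acc_def christoffel_def pd minv sum_3 wedge_def fc frame_def V2_def coord3_def ax Let_def)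
       (simp add: algebra_simps power2_eq_square)
  have e3: "z'' t + (x t)^2 * x' t * y' t + x t * x' t * z' t + x' t * y' t = (x t)^2 * x' t / lam - x' t / lam"
    using arg_cong[OF M, of "\<lambda>v. v $ 3"] ln
    by (simp add: cov_acc_def christoffel_def pd minv sum_3 wedge_def fc frame_def V2_def coord3_def ax Let_def)
       (simp add: algebra_simps power2_eq_square)
  show ?thesis
  proof (intro conjI)
    show "y'' t - x' t * (z' t + x t * y' t) = - (x t * x' t) / lam"
      using e2 by (simp add: algebra_simps)
    have "x'' t / lam = - lam * (x t * (y' t)^2 + y' t * z' t) - z' t"
      using e1 ln by (simp add: field_simps power2_eq_square)
    then show "(lam * y' t + 1) * (z' t + x t * y' t) = x t * y' t - x'' t / lam"
      by (simp add: algebra_simps power2_eq_square)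
    have h: "y'' t = x t * x' t * y' t + x' t * z' t - x t * x' t / lam"
      using e2 by (simp add: algebra_simps)
    have "x t * y'' t = x t * (x t * x' t * y' t + x' t * z' t - x t * x' t / lam)"
      by (simp add: h)
    then show "z'' t + x' t * y' t + x t * y'' t = - x' t / lam"
      using e3 by (simp add: algebra_simps power2_eq_square diff_divide_distrib)
  qed
qed

end
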